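(* Let $a,b,k\in\mathbb{N}$ with $k\le\min(a,b)$ and $P=[a]\times[b]$ with the product order. Then $(\mathcal{A}_k(P),\le_k)\cong\mathcal{C}(a,k)\times\mathcal{C}(b,k)$ as posets.
   Context: $[n]=\{1,\dots,n\}$. For a finite poset $P$, $\mathcal{A}_k(P)$ is the set of antichains of $P$ of size $k$; for $A,B\in\mathcal{A}_k(P)$, $A\prec_k B$ means $A\setminus B=\{a\}$, $B\setminus A=\{b\}$ are singletons with $a<_P b$, and $\le_k$ is the reflexive transitive closure of $\prec_k$. For $k\le n$, $\mathcal{C}(n,k)$ is the set of $k$-element subsets of $[n]$ written as increasing sequences $(x_1<\dots<x_k)$, with $\mathbf{x}\le\mathbf{y}$ iff $x_i\le y_i$ for all $i$; products carry the product order. *)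

theory Defs
  imports Main
begin

definition antichains :: "'a set \<Rightarrow> ('a \<Rightarrow> 'a \<Rightarrow> bool) \<Rightarrow> nat \<Rightarrow> 'a set set" where
  "antichains X le k = {A. A \<subseteq> X \<and> finite A \<and> card A = k \<and>
      (\<forall>x\<in>A. \<forall>y\<in>A. le x y \<longrightarrow> x = y)}"

definition antichain_step :: "'a set \<Rightarrow> ('a \<Rightarrow> 'a \<Rightarrow> bool) \<Rightarrow> nat \<Rightarrow> 'a set \<Rightarrow> 'a set \<Rightarrow> bool" where
  "antichain_step X le k A B \<longleftrightarrow> A \<in> antichains X le k \<and> B \<in> antichains X le k \<and>
      (\<exists>a b. A - B = {a} \<and> B - A = {b} \<and> le a b \<and> a \<noteq> b)"

definition antichain_le :: "'a set \<Rightarrow> ('a \<Rightarrow> 'a \<Rightarrow> bool) \<Rightarrow> nat \<Rightarrow> 'a set \<Rightarrow> 'a set \<Rightarrow> bool" where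
  "antichain_le X le k = (antichain_step X le k)\<^sup>*\<^sup>*"

definition grid :: "nat \<Rightarrow> nat \<Rightarrow> (nat \<times> nat) set" where
  "grid a b = {1..a} \<times> {1..b}"

definition grid_le :: "nat \<times> nat \<Rightarrow> nat \<times> nat \<Rightarrow> bool" where
  "grid_le p q \<longleftrightarrow> fst p \<le> fst q \<and> snd p \<le> snd q"

text \<open>C(n,k): k-subsets of [n] as strictly increasing sequences, componentwise order.\<close>
definition kchains :: "nat \<Rightarrow> nat \<Rightarrow> nat list set" where
  "kchains n k = {xs. length xs = k \<and> sorted_wrt (<) xs \<and> set xs \<subseteq> {1..n}}"

definition chain_le :: "nat list \<Rightarrow> nat list \<Rightarrow> bool" where
  "chain_le xs ys \<longleftrightarrow> length xs = length ys \<and> (\<forall>i<length xs. xs ! i \<le> ys ! i)"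

definition prod_le :: "('a \<Rightarrow> 'a \<Rightarrow> bool) \<Rightarrow> ('b \<Rightarrow> 'b \<Rightarrow> bool) \<Rightarrow> 'a \<times> 'b \<Rightarrow> 'a \<times> 'b \<Rightarrow> bool" where
  "prod_le r s p q \<longleftrightarrow> r (fst p) (fst q) \<and> s (snd p) (snd q)"

definition order_iso :: "'a set \<Rightarrow> ('a \<Rightarrow> 'a \<Rightarrow> bool) \<Rightarrow> 'b set \<Rightarrow> ('b \<Rightarrow> 'b \<Rightarrow> bool) \<Rightarrow> bool" where
  "order_iso X leX Y leY \<longleftrightarrow> (\<exists>f. bij_betw f X Y \<and>
      (\<forall>x\<in>X. \<forall>y\<in>X. leX x y \<longleftrightarrow> leY (f x) (f y)))"

end

theory Submission
  imports Defs
begin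

lemma ss_less_iff:
  assumes "sorted_wrt (<) (xs::nat list)" "i < length xs" "j < length xs"
  shows "xs!i < xs!j \<longleftrightarrow> i < j"
  using assms sorted_wrt_nth_less[OF assms(1)]
  by (metis less_asym linorder_neqE_nat)

lemma ss_le_iff:
  assumes "sorted_wrt (<) (xs::nat list)" "i < length xs" "j < length xs"
  shows "xs!i \<le> xs!j \<longleftrightarrow> i \<le> j"
  using ss_less_iff[OF assms(1,3,2)] by linarith

lemma ss_inj:
  assumes "sorted_wrt (<) (xs::nat list)"
  shows "inj_on ((!) xs) {..<length xs}"
  using ss_less_iff[OF assms] by (intro inj_onI) (metis lessThan_iff linorder_neqE_nat less_irrefl)

lemma card_less_nth:
  assumes "sorted_wrt (<) (xs::nat list)" "i < length xs"
  shows "card {z\<in>set xs. z < xs!i} = i"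
proof -
  have "{z\<in>set xs. z < xs!i} = (!) xs ` {..<i}"
    using ss_less_iff[OF assms(1) _ assms(2)] assms(2)
    by (auto simp: in_set_conv_nth image_iff) (metis less_trans)
  moreover have "inj_on ((!) xs) {..<i}"
    by (rule inj_on_subset[OF ss_inj[OF assms(1)]]) (use assms(2) in auto)
  ultimately show ?thesis by (simp add: card_image)
qed

lemma nth_rank:
  assumes "sorted_wrt (<) (xs::nat list)" "x \<in> set xs"
  shows "xs ! card {z\<in>set xs. z < x} = x" "card {z\<in>set xs. z < x} < length xs"
  using assms card_less_nth[OF assms(1)] by (auto simp: in_set_conv_nth)

lemma kchains_nth:
  "xs \<in> kchains n k \<longleftrightarrow> length xs = k \<and> sorted_wrt (<) xs \<and> (\<forall>i<k. 1 \<le> xs!i \<and> xs!i \<le> n)"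
  unfolding kchains_def by (auto simp: in_set_conv_nth subset_iff)

definition hf :: "nat \<Rightarrow> nat list \<Rightarrow> nat list \<Rightarrow> nat \<Rightarrow> nat \<times> nat" where
  "hf k xs ys i = (xs!i, ys!(k-1-i))"

definition gP :: "nat \<Rightarrow> nat list \<times> nat list \<Rightarrow> (nat \<times> nat) set" where
  "gP k p = hf k (fst p) (snd p) ` {..<k}"

definition fA :: "(nat \<times> nat) set \<Rightarrow> nat list \<times> nat list" where
  "fA A = (sorted_list_of_set (fst`A), sorted_list_of_set (snd`A))"

lemma hf_inj:
  assumes "xs \<in> kchains a k"
  shows "inj_on (hf k xs ys) {..<k}"
proof (rule inj_onI)
  fix i j assume "i \<in> {..<k}" "j \<in> {..<k}" "hf k xs ys i = hf k xs ys j"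
  then show "i = j" using ss_le_iff[of xs i j] ss_le_iff[of xs j i] assms
    by (auto simp: hf_def kchains_nth)
qed

lemma g_AC:
  assumes "xs \<in> kchains a k" "ys \<in> kchains b k"
  shows "gP k (xs,ys) \<in> antichains (grid a b) grid_le k"
proof -
  have inj: "inj_on (hf k xs ys) {..<k}" using hf_inj[OF assms(1)] .
  have sub: "gP k (xs,ys) \<subseteq> grid a b"
  proof
    fix p assume "p \<in> gP k (xs,ys)"
    then obtain i where i: "i < k" "p = hf k xs ys i" by (auto simp: gP_def)
    have "k-1-i < k" using i by auto
    then show "p \<in> grid a b" using i assms by (auto simp: kchains_nth grid_def hf_def)
  qed
  have ac: "\<forall>p\<in>gP k (xs,ys). \<forall>q\<in>gP k (xs,ys). grid_le p q \<longrightarrow> p = q"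
  proof (intro ballI impI)
    fix p q assume "p \<in> gP k (xs,ys)" "q \<in> gP k (xs,ys)" "grid_le p q"
    then obtain i j where ij: "i < k" "j < k" "p = hf k xs ys i" "q = hf k xs ys j"
      and le: "xs!i \<le> xs!j" "ys!(k-1-i) \<le> ys!(k-1-j)"
      by (auto simp: gP_def grid_le_def hf_def)
    have "i \<le> j" using le(1) ss_le_iff[of xs i j] ij assms(1) by (auto simp: kchains_nth)
    moreover have "k-1-i \<le> k-1-j" using le(2) ss_le_iff[of ys "k-1-i" "k-1-j"] ij assms(2)
      by (auto simp: kchains_nth)
    ultimately have "i = j" using ij by auto
    then show "p = q" using ij by simp
  qed
  show ?thesis unfolding antichains_def using sub ac inj
    by (auto simp: gP_def card_image)
qed

lemma fg:
  assumes "xs \<in> kchains a k" "ys \<in> kchains b k"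
  shows "fA (gP k (xs,ys)) = (xs,ys)"
proof -
  have "fst ` gP k (xs,ys) = set xs"
    using assms(1) by (auto simp: gP_def hf_def kchains_nth in_set_conv_nth image_iff)
  moreover have "snd ` gP k (xs,ys) = set ys"
  proof
    show "snd ` gP k (xs,ys) \<subseteq> set ys" using assms(2)
      by (auto simp: gP_def hf_def kchains_nth)
    show "set ys \<subseteq> snd ` gP k (xs,ys)"
    proof
      fix y assume "y \<in> set ys"
      then obtain j where j: "j < k" "y = ys!j" using assms(2) by (auto simp: kchains_nth in_set_conv_nth)
      then have "y = snd (hf k xs ys (k-1-j))" "k-1-j < k" by (auto simp: hf_def)
      then show "y \<in> snd ` gP k (xs,ys)" by (auto simp: gP_def)
    qed
  qed
  moreover have "sorted_list_of_set (set xs) = xs" "sorted_list_of_set (set ys) = ys"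
    using assms by (auto simp: kchains_def strict_sorted_iff sorted_list_of_set.idem_if_sorted_distinct)
  ultimately show ?thesis by (simp add: fA_def)
qed

lemma AC_inj:
  assumes "A \<in> antichains X grid_le k"
  shows "inj_on fst A" "inj_on snd A"
proof -
  have ac: "\<And>p q. p \<in> A \<Longrightarrow> q \<in> A \<Longrightarrow> fst p \<le> fst q \<Longrightarrow> snd p \<le> snd q \<Longrightarrow> p = q"
    using assms unfolding antichains_def grid_le_def by auto
  show "inj_on fst A"
    by (rule inj_onI) (metis ac nat_le_linear order_refl)
  show "inj_on snd A"
    by (rule inj_onI) (metis ac nat_le_linear order_refl)
qed

lemma fA_kchains:
  assumes "A \<in> antichains (grid a b) grid_le k"
  shows "fA A \<in> kchains a k \<times> kchains b k"
proof -
  have fin: "finite A" "card A = k" "A \<subseteq> grid a b" using assms by (auto simp: antichains_def)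
  have "card (fst ` A) = k" "card (snd ` A) = k"
    using AC_inj[OF assms] fin by (auto simp: card_image)
  moreover have "fst ` A \<subseteq> {1..a}" "snd ` A \<subseteq> {1..b}" using fin(3) by (auto simp: grid_def)
  ultimately show ?thesis using fin
    by (auto simp: fA_def kchains_def)
qed

lemma gf:
  assumes AC: "A \<in> antichains (grid a b) grid_le k"
  shows "gP k (fA A) = A"
proof -
  define xs where "xs = sorted_list_of_set (fst ` A)"
  define ys where "ys = sorted_list_of_set (snd ` A)"
  have fin: "finite A" "card A = k" using AC by (auto simp: antichains_def)
  have ac: "\<And>p q. p \<in> A \<Longrightarrow> q \<in> A \<Longrightarrow> grid_le p q \<Longrightarrow> p = q" using AC by (auto simp: antichains_def)
  have kc: "xs \<in> kchains a k" "ys \<in> kchains b k" using fA_kchains[OF AC] by (auto simp: fA_def xs_def ys_def)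
  have sx: "set xs = fst ` A" "sorted_wrt (<) xs" using fin by (auto simp: xs_def)
  have sy: "set ys = snd ` A" "sorted_wrt (<) ys" using fin by (auto simp: ys_def)
  have "A \<subseteq> gP k (xs, ys)"
  proof
    fix p assume pA: "p \<in> A"
    obtain x y where p: "p = (x,y)" by fastforce
    define i where "i = card {z\<in>set xs. z < x}"
    define j where "j = card {z\<in>set ys. z < y}"
    have xin: "x \<in> set xs" using pA p sx(1) by (metis fst_conv image_eqI)
    have yin: "y \<in> set ys" using pA p sy(1) by (metis snd_conv image_eqI)
    have lx: "length xs = k" using kc by (simp add: kchains_def)
    have xi: "xs ! i = x" "i < k" using nth_rank[OF sx(2) xin] lx by (simp_all add: i_def)
    have yj: "ys ! j = y" using nth_rank[OF sy(2) yin] by (simp add: j_def)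
    have "{z\<in>set xs. z < x} = fst ` {q\<in>A. fst q < x}" using sx(1) by auto
    moreover have "inj_on fst {q\<in>A. fst q < x}"
      by (rule inj_on_subset[OF AC_inj(1)[OF AC]]) auto
    ultimately have ic: "i = card {q\<in>A. fst q < x}" unfolding i_def by (simp add: card_image)
    have "{z\<in>set ys. z < y} = snd ` {q\<in>A. snd q < y}" using sy(1) by auto
    moreover have "inj_on snd {q\<in>A. snd q < y}"
      by (rule inj_on_subset[OF AC_inj(2)[OF AC]]) auto
    ultimately have jc: "j = card {q\<in>A. snd q < y}" unfolding j_def by (simp add: card_image)
    have split: "A = {q\<in>A. fst q < x} \<union> ({q\<in>A. snd q < y} \<union> {(x,y)})"
    proof -
      have "q \<in> A \<Longrightarrow> q \<noteq> (x,y) \<Longrightarrow> fst q < x \<or> snd q < y" for q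
        proof (rule ccontr)
        assume "q \<in> A" "q \<noteq> (x,y)" "\<not> (fst q < x \<or> snd q < y)"
        then have "grid_le p q" using p by (auto simp: grid_le_def)
        then show False using ac[of p q] pA p \<open>q \<in> A\<close> \<open>q \<noteq> (x,y)\<close> by auto
      qed
      then show ?thesis using pA p by auto
    qed
    have d1: "{q\<in>A. snd q < y} \<inter> {(x,y)} = {}" by auto
    have d2: "{q\<in>A. fst q < x} \<inter> ({q\<in>A. snd q < y} \<union> {(x,y)}) = {}"
    proof -
      have "q \<in> A \<Longrightarrow> fst q < x \<Longrightarrow> snd q < y \<Longrightarrow> False" for q
        using ac[of q p] pA p by (auto simp: grid_le_def)
      then show ?thesis by auto
    qed
    have f1: "finite {q\<in>A. fst q < x}" "finite {q\<in>A. snd q < y}" using fin by auto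
    have "card A = card ({q\<in>A. fst q < x} \<union> ({q\<in>A. snd q < y} \<union> {(x,y)}))"
      using split by (rule arg_cong)
    also have "\<dots> = card {q\<in>A. fst q < x} + card ({q\<in>A. snd q < y} \<union> {(x,y)})"
      by (rule card_Un_disjoint[OF f1(1) _ d2]) (use f1 in simp)
    also have "card ({q\<in>A. snd q < y} \<union> {(x,y)}) = card {q\<in>A. snd q < y} + 1"
      using card_Un_disjoint[OF f1(2) _ d1] by simp
    finally have "k = i + (j + 1)" using fin ic jc by simp
    then have "j = k - 1 - i" by simp
    then show "p \<in> gP k (xs, ys)" using xi yj p by (auto simp: gP_def hf_def)
  qed
  moreover have "card (gP k (xs, ys)) = k" using g_AC[OF kc] by (auto simp: antichains_def)
  moreover have "finite (gP k (xs, ys))" by (simp add: gP_def)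
  ultimately have "A = gP k (xs, ys)" using fin by (simp add: card_subset_eq)
  then show ?thesis by (simp add: fA_def xs_def ys_def)
qed

lemma count_chain_le:
  fixes S T :: "nat set"
  assumes fin: "finite S" "finite T" and cd: "card S = card T"
    and cnt: "\<And>t. card {y\<in>T. y \<le> t} \<le> card {x\<in>S. x \<le> t}"
  shows "chain_le (sorted_list_of_set S) (sorted_list_of_set T)"
proof -
  define xs where "xs = sorted_list_of_set S"
  define ys where "ys = sorted_list_of_set T"
  have sx: "set xs = S" "sorted_wrt (<) xs" "length xs = card S" using fin by (auto simp: xs_def)
  have sy: "set ys = T" "sorted_wrt (<) ys" "length ys = card T" using fin by (auto simp: ys_def)
  have "xs!i \<le> ys!i" if i: "i < length xs" for i
  proof (rule ccontr)
    assume "\<not> xs!i \<le> ys!i"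
    then have gt: "ys!i < xs!i" by simp
    have il: "i < length ys" using i sx sy cd by simp
    have "(!) ys ` {..i} \<subseteq> {y\<in>T. y \<le> ys!i}"
      using ss_le_iff[OF sy(2) _ il] il sy(1) by auto
    moreover have "card ((!) ys ` {..i}) = Suc i"
    proof -
      have "inj_on ((!) ys) {..i}" by (rule inj_on_subset[OF ss_inj[OF sy(2)]]) (use il in auto)
      then show ?thesis by (simp add: card_image)
    qed
    moreover have "finite {y\<in>T. y \<le> ys!i}" using fin by simp
    ultimately have c1: "Suc i \<le> card {y\<in>T. y \<le> ys!i}"
      by (metis card_mono)
    have "{x\<in>S. x \<le> ys!i} \<subseteq> (!) xs ` {..<i}"
    proof
      fix x assume "x \<in> {x\<in>S. x \<le> ys!i}"
      then obtain j where j: "j < length xs" "x = xs!j" "x \<le> ys!i" using sx(1) by (auto simp: in_set_conv_nth)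
      have "j < i"
      proof (rule ccontr)
        assume "\<not> j < i"
        then have "xs!i \<le> xs!j" using ss_le_iff[OF sx(2) i j(1)] by simp
        then show False using j gt by simp
      qed
      then show "x \<in> (!) xs ` {..<i}" using j by auto
    qed
    then have "card {x\<in>S. x \<le> ys!i} \<le> card ((!) xs ` {..<i})"
      by (intro card_mono) auto
    also have "\<dots> \<le> i" using card_image_le[of "{..<i}" "(!) xs"] by simp
    finally have "card {x\<in>S. x \<le> ys!i} \<le> i" .
    then show False using c1 cnt[of "ys!i"] by simp
  qed
  then show ?thesis using sx sy cd by (simp add: chain_le_def xs_def ys_def)
qed

lemma count_step:
  fixes S :: "nat set"
  assumes "finite S" "u \<in> S" "v \<notin> S - {u}" "u \<le> v"
  shows "card {y\<in>insert v (S-{u}). y \<le> t} \<le> card {x\<in>S. x \<le> t}"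
proof (cases "v \<le> t")
  case True
  define M where "M = {x\<in>S. x \<le> t}"
  have L: "{y\<in>insert v (S-{u}). y \<le> t} = insert v (M - {u})" using True by (auto simp: M_def)
  have uM: "u \<in> M" using True assms by (auto simp: M_def)
  have fM: "finite M" using assms by (simp add: M_def)
  have vM: "v \<notin> M - {u}" using assms by (auto simp: M_def)
  have "card (insert v (M - {u})) = Suc (card (M - {u}))"
    using fM vM by (simp add: card_insert_disjoint)
  also have "card (M - {u}) = card M - 1" using uM by (simp add: card_Diff_singleton)
  also have "card M > 0" using fM uM card_gt_0_iff by blast
  then have "Suc (card M - 1) = card M" by simp
  finally show ?thesis using L by (simp add: M_def)
next
  case False
  then have "{y\<in>insert v (S-{u}). y \<le> t} \<subseteq> {x\<in>S. x \<le> t}" by auto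
  then show ?thesis using assms(1) by (simp add: card_mono)
qed

lemma proj_step:
  fixes \<pi> :: "nat \<times> nat \<Rightarrow> nat"
  assumes inj: "inj_on \<pi> A" "inj_on \<pi> B" and d: "A - B = {pa}" "B - A = {pb}"
    and fin: "finite A" "finite B" "card A = card B" and le: "\<pi> pa \<le> \<pi> pb"
  shows "chain_le (sorted_list_of_set (\<pi>`A)) (sorted_list_of_set (\<pi>`B))"
proof -
  have B: "B = insert pb (A - {pa})" "pa \<in> A" "pb \<notin> A" "pb \<in> B" using d by blast+
  have "\<pi>`(A - {pa}) = \<pi>`A - {\<pi> pa}" using inj(1) B(2) by (auto simp: inj_on_def)
  then have T: "\<pi>`B = insert (\<pi> pb) (\<pi>`A - {\<pi> pa})" using B(1) by simp
  have nv: "\<pi> pb \<notin> \<pi>`A - {\<pi> pa}"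
  proof
    assume "\<pi> pb \<in> \<pi>`A - {\<pi> pa}"
    then obtain q where q: "q \<in> A" "q \<noteq> pa" "\<pi> q = \<pi> pb" by (metis DiffE imageE singletonI)
    then have "q \<in> B" using B by auto
    then have "q = pb" using inj(2) q B(4) by (auto simp: inj_on_def)
    then show False using q B by simp
  qed
  have "card (\<pi>`A) = card (\<pi>`B)" using inj fin by (simp add: card_image)
  then show ?thesis
    using count_chain_le[of "\<pi>`A" "\<pi>`B"] count_step[of "\<pi>`A" "\<pi> pa" "\<pi> pb"] fin B(2) nv le T
    by auto
qed

lemma step_mono:
  assumes "antichain_step (grid a b) grid_le k A B"
  shows "prod_le chain_le chain_le (fA A) (fA B)"
proof -
  have AC: "A \<in> antichains (grid a b) grid_le k" "B \<in> antichains (grid a b) grid_le k"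
    using assms by (auto simp: antichain_step_def)
  obtain pa pb where d: "A - B = {pa}" "B - A = {pb}" "grid_le pa pb"
    using assms by (auto simp: antichain_step_def)
  have fin: "finite A" "finite B" "card A = card B" using AC by (auto simp: antichains_def)
  show ?thesis
    using proj_step[OF AC_inj(1)[OF AC(1)] AC_inj(1)[OF AC(2)] d(1,2) fin]
      proj_step[OF AC_inj(2)[OF AC(1)] AC_inj(2)[OF AC(2)] d(1,2) fin] d(3)
    by (auto simp: prod_le_def fA_def grid_le_def)
qed

lemma gen_step:
  fixes h h' :: "nat \<Rightarrow> nat \<times> nat"
  assumes inj: "inj_on h {..<k}" "inj_on h' {..<k}" and i: "i < k"
    and same: "\<And>j. j < k \<Longrightarrow> j \<noteq> i \<Longrightarrow> h' j = h j"
    and AC: "h ` {..<k} \<in> antichains X le k" "h' ` {..<k} \<in> antichains X le k"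
    and le: "le (h i) (h' i)" "h i \<noteq> h' i"
  shows "antichain_step X le k (h ` {..<k}) (h' ` {..<k})"
proof -
  define C where "C = h ` ({..<k} - {i})"
  have C': "h' ` ({..<k} - {i}) = C" unfolding C_def using same by (intro image_cong) auto
  have eq: "insert i ({..<k} - {i}) = {..<k}" using i by auto
  have "h ` insert i ({..<k} - {i}) = insert (h i) C" unfolding C_def by (rule image_insert)
  moreover have "h' ` insert i ({..<k} - {i}) = insert (h' i) C" unfolding C'[symmetric] by (rule image_insert)
  ultimately have A: "h ` {..<k} = insert (h i) C" "h' ` {..<k} = insert (h' i) C"
    unfolding eq by auto
  have B: "h' ` {..<k} = insert (h' i) C" using A(2) .
  have n1: "h i \<notin> C" unfolding C_def
    using inj_on_image_mem_iff[OF inj(1), of i "{..<k} - {i}"] i by auto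
  have n2: "h' i \<notin> C" unfolding C'[symmetric]
    using inj_on_image_mem_iff[OF inj(2), of i "{..<k} - {i}"] i by auto
  have "insert (h i) C - insert (h' i) C = {h i}" using n1 n2 le(2) by auto
  then have d1: "h ` {..<k} - h' ` {..<k} = {h i}" unfolding A(1) B .
  have "insert (h' i) C - insert (h i) C = {h' i}" using n1 n2 le(2) by auto
  then have d2: "h' ` {..<k} - h ` {..<k} = {h' i}" unfolding A(1) B .
  show ?thesis unfolding antichain_step_def
    using AC d1 d2 le by auto
qed

definition D :: "nat list \<Rightarrow> nat list \<Rightarrow> nat" where
  "D u v = (\<Sum>j<length v. v!j - u!j)"

lemma bump:
  assumes kc: "xs \<in> kchains n k" "xs' \<in> kchains n k" and le: "chain_le xs xs'" and ne: "xs \<noteq> xs'"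
  shows "\<exists>i<k. xs!i < xs'!i \<and> xs[i := Suc (xs!i)] \<in> kchains n k \<and> chain_le (xs[i := Suc (xs!i)]) xs'
      \<and> D (xs[i := Suc (xs!i)]) xs' < D xs xs'"
proof -
  have lx: "length xs = k" "length xs' = k" "sorted_wrt (<) xs" "sorted_wrt (<) xs'"
    and bx: "\<forall>j<k. 1 \<le> xs!j \<and> xs!j \<le> n" "\<forall>j<k. 1 \<le> xs'!j \<and> xs'!j \<le> n"
    using kc by (auto simp: kchains_nth)
  have lej: "\<And>j. j < k \<Longrightarrow> xs!j \<le> xs'!j" using le lx by (auto simp: chain_le_def)
  define S where "S = {j. j < k \<and> xs!j \<noteq> xs'!j}"
  have "S \<noteq> {}" using ne lx nth_equalityI[of xs xs'] by (auto simp: S_def)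
  moreover have fS: "finite S" by (simp add: S_def)
  ultimately have iS: "Max S \<in> S" by simp
  define i where "i = Max S"
  have i: "i < k" "xs!i < xs'!i" using iS lej[of i] by (auto simp: i_def S_def)
  have above: "\<And>j. i < j \<Longrightarrow> j < k \<Longrightarrow> xs!j = xs'!j"
  proof (rule ccontr)
    fix j assume "i < j" "j < k" "xs!j \<noteq> xs'!j"
    then have "j \<in> S" by (simp add: S_def)
    then have "j \<le> i" using fS by (simp add: i_def)
    then show False using \<open>i < j\<close> by simp
  qed
  define xs1 where "xs1 = xs[i := Suc (xs!i)]"
  have n1: "\<And>j. xs1!j = (if j = i then Suc (xs!i) else xs!j)" if "True"
    using lx i by (simp add: xs1_def nth_list_update)
  have n1': "\<And>j. xs1!j = (if j = i then Suc (xs!i) else xs!j)" using n1 by simp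
  have l1: "length xs1 = k" using lx by (simp add: xs1_def)
  have s1: "sorted_wrt (<) xs1"
    unfolding sorted_wrt_iff_nth_less l1
  proof (intro allI impI)
    fix p q assume pq: "p < q" "q < k"
    have o: "xs!p < xs!q" using sorted_wrt_nth_less[OF lx(3)] pq lx by simp
    show "xs1!p < xs1!q"
    proof (cases "q = i")
      case True then show ?thesis using o pq n1' by simp
    next
      case False
      show ?thesis
      proof (cases "p = i")
        case True
        have "xs'!i < xs'!q" using sorted_wrt_nth_less[OF lx(4)] pq lx True by simp
        moreover have "xs!q = xs'!q" using above pq True by simp
        ultimately show ?thesis using True False n1' i by simp
      next
        case False2: False
        then show ?thesis using o False n1' by simp
      qed
    qed
  qed
  have b1: "\<forall>j<k. 1 \<le> xs1!j \<and> xs1!j \<le> n" using bx i n1' by auto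
  have kc1: "xs1 \<in> kchains n k" using l1 s1 b1 by (simp add: kchains_nth)
  have le1: "chain_le xs1 xs'" using lej i n1' l1 lx by (auto simp: chain_le_def)
  have "D xs1 xs' < D xs xs'" unfolding D_def lx(2)
  proof (rule sum_strict_mono_ex1)
    show "finite {..<k}" by simp
    show "\<forall>j\<in>{..<k}. xs'!j - xs1!j \<le> xs'!j - xs!j" using n1' by auto
    show "\<exists>j\<in>{..<k}. xs'!j - xs1!j < xs'!j - xs!j" using i n1' by (intro bexI[of _ i]) auto
  qed
  then show ?thesis using i kc1 le1 by (auto simp: xs1_def)
qed

lemma chain_main:
  assumes "xs \<in> kchains a k" "xs' \<in> kchains a k" "ys \<in> kchains b k" "ys' \<in> kchains b k"
    "chain_le xs xs'" "chain_le ys ys'"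
  shows "antichain_le (grid a b) grid_le k (gP k (xs,ys)) (gP k (xs',ys'))"
  using assms
proof (induction "D xs xs' + D ys ys'" arbitrary: xs ys rule: less_induct)
  case less
  show ?case
  proof (cases "xs = xs'")
    case False
    then obtain i where i: "i < k" "xs!i < xs'!i" and kc1: "xs[i := Suc (xs!i)] \<in> kchains a k"
      and le1: "chain_le (xs[i := Suc (xs!i)]) xs'" and d1: "D (xs[i := Suc (xs!i)]) xs' < D xs xs'"
      using bump[OF less.prems(1,2,5)] by blast
    define xs1 where "xs1 = xs[i := Suc (xs!i)]"
    have lx: "length xs = k" using less.prems by (simp add: kchains_def)
    have IH: "antichain_le (grid a b) grid_le k (gP k (xs1,ys)) (gP k (xs',ys'))"
      using less.hyps[of xs1 ys] d1 kc1 le1 less.prems by (simp add: xs1_def)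
    have st: "antichain_step (grid a b) grid_le k (gP k (xs,ys)) (gP k (xs1,ys))"
      unfolding gP_def fst_conv snd_conv
    proof (rule gen_step[OF hf_inj[OF less.prems(1)] hf_inj[OF kc1[folded xs1_def]] i(1)])
      show "\<And>j. j < k \<Longrightarrow> j \<noteq> i \<Longrightarrow> hf k xs1 ys j = hf k xs ys j"
        by (simp add: hf_def xs1_def)
      show "hf k xs ys ` {..<k} \<in> antichains (grid a b) grid_le k"
        using g_AC[OF less.prems(1,3)] by (simp add: gP_def)
      show "hf k xs1 ys ` {..<k} \<in> antichains (grid a b) grid_le k"
        using g_AC[OF kc1[folded xs1_def] less.prems(3)] by (simp add: gP_def)
      show "grid_le (hf k xs ys i) (hf k xs1 ys i)" "hf k xs ys i \<noteq> hf k xs1 ys i"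
        using lx i by (simp_all add: hf_def xs1_def grid_le_def)
    qed
    show ?thesis using st IH unfolding antichain_le_def
      by (rule converse_rtranclp_into_rtranclp)
  next
    case True
    show ?thesis
    proof (cases "ys = ys'")
      case True2: True
      show ?thesis using True True2 by (simp add: antichain_le_def)
    next
      case False
      then obtain i where i: "i < k" "ys!i < ys'!i" and kc1: "ys[i := Suc (ys!i)] \<in> kchains b k"
        and le1: "chain_le (ys[i := Suc (ys!i)]) ys'" and d1: "D (ys[i := Suc (ys!i)]) ys' < D ys ys'"
        using bump[OF less.prems(3,4,6)] by blast
      define ys1 where "ys1 = ys[i := Suc (ys!i)]"
      have ly: "length ys = k" using less.prems by (simp add: kchains_def)
      have IH: "antichain_le (grid a b) grid_le k (gP k (xs,ys1)) (gP k (xs',ys'))"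
        using less.hyps[of xs ys1] d1 kc1 le1 less.prems by (simp add: ys1_def)
      define m where "m = k - 1 - i"
      have m: "m < k" "k - 1 - m = i" using i by (auto simp: m_def)
      have st: "antichain_step (grid a b) grid_le k (gP k (xs,ys)) (gP k (xs,ys1))"
        unfolding gP_def fst_conv snd_conv
      proof (rule gen_step[OF hf_inj[OF less.prems(1)] hf_inj[OF less.prems(1)] m(1)])
        show "\<And>j. j < k \<Longrightarrow> j \<noteq> m \<Longrightarrow> hf k xs ys1 j = hf k xs ys j"
          using m by (auto simp: hf_def ys1_def)
        show "hf k xs ys ` {..<k} \<in> antichains (grid a b) grid_le k"
          using g_AC[OF less.prems(1,3)] by (simp add: gP_def)
        show "hf k xs ys1 ` {..<k} \<in> antichains (grid a b) grid_le k"
          using g_AC[OF less.prems(1) kc1[folded ys1_def]] by (simp add: gP_def)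
        show "grid_le (hf k xs ys m) (hf k xs ys1 m)" "hf k xs ys m \<noteq> hf k xs ys1 m"
          using ly i m by (simp_all add: hf_def ys1_def grid_le_def)
      qed
      show ?thesis using st IH unfolding antichain_le_def
        by (rule converse_rtranclp_into_rtranclp)
    qed
  qed
qed

lemma le_mono:
  assumes "antichain_le (grid a b) grid_le k A B" "A \<in> antichains (grid a b) grid_le k"
  shows "prod_le chain_le chain_le (fA A) (fA B)"
  using assms(1) unfolding antichain_le_def
proof (induction rule: rtranclp_induct)
  case base
  then show ?case by (simp add: prod_le_def chain_le_def)
next
  case (step y z)
  then show ?case using step_mono[OF step(2)]
    by (auto simp: prod_le_def chain_le_def) (meson order_trans)+
qed

theorem proposition3p1:
  fixes a b k :: nat
  assumes "k \<le> min a b"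
  shows "order_iso (antichains (grid a b) grid_le k) (antichain_le (grid a b) grid_le k)
           (kchains a k \<times> kchains b k) (prod_le chain_le chain_le)"
  unfolding order_iso_def
proof (intro exI conjI)
  show "bij_betw fA (antichains (grid a b) grid_le k) (kchains a k \<times> kchains b k)"
  proof (rule bij_betw_byWitness[where f' = "gP k"])
    show "\<forall>A\<in>antichains (grid a b) grid_le k. gP k (fA A) = A" using gf by blast
    show "\<forall>p\<in>kchains a k \<times> kchains b k. fA (gP k p) = p" using fg by fastforce
    show "fA ` antichains (grid a b) grid_le k \<subseteq> kchains a k \<times> kchains b k" using fA_kchains by blast
    show "gP k ` (kchains a k \<times> kchains b k) \<subseteq> antichains (grid a b) grid_le k" using g_AC by fastforce
  qed
  show "\<forall>A\<in>antichains (grid a b) grid_le k. \<forall>B\<in>antichains (grid a b) grid_le k.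
      antichain_le (grid a b) grid_le k A B = prod_le chain_le chain_le (fA A) (fA B)"
  proof (intro ballI iffI)
    fix A B assume "A \<in> antichains (grid a b) grid_le k" "antichain_le (grid a b) grid_le k A B"
    then show "prod_le chain_le chain_le (fA A) (fA B)" using le_mono by blast
  next
    fix A B assume A: "A \<in> antichains (grid a b) grid_le k" and B: "B \<in> antichains (grid a b) grid_le k"
      and le: "prod_le chain_le chain_le (fA A) (fA B)"
    obtain xs ys where p: "fA A = (xs,ys)" by fastforce
    obtain xs' ys' where q: "fA B = (xs',ys')" by fastforce
    have "antichain_le (grid a b) grid_le k (gP k (xs,ys)) (gP k (xs',ys'))"
      using chain_main[of xs a k xs' ys b ys'] fA_kchains[OF A] fA_kchains[OF B] le p q
      by (auto simp: prod_le_def)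
    then show "antichain_le (grid a b) grid_le k A B" using gf[OF A] gf[OF B] p q by simp
  qed
qed

end
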